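(* Let $P$ be a finite sequence of nonnegative integers. The following are equivalent: (i) $P$ is loop graphic; (ii) the pair $(P,P)$ is bigraphic; (iii) $P$ is mirror bigraphic.
   Context: An $l$-graph is a graph without multiple edges and with at most one loop attached at each vertex; the degree of a vertex is the number of edges incident with it, a loop contributing exactly one to the degree. A sequence $P$ is loop graphic if there is an $l$-graph whose vertex degrees are exactly the elements of $P$. For sequences $P,Q$ of nonnegative integers, the pair $(P,Q)$ is bigraphic if there is a bipartite graph $G=(V_1\cup V_2,E)$ (with stable sets $V_1,V_2$) whose vertices in $V_1$ have degrees equal to the elements of $P$ and whose vertices in $V_2$ have degrees equal to the elements of $Q$; such $G$ realizes $(P,Q)$. A bipartite graph $G=(V_1\cup V_2,E)$ is mirror if there is a bijection $\varphi:V_1\to V_2$ with $u\varphi(v)\in E \iff \varphi(u)v\in E$ for all $u,v\in V_1$. A sequence $P$ is mirror bigraphic if $(P,P)$ is bigraphic and some mirror bipartite graph realizes $(P,P)$. *)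

theory Defs
  imports Main
begin

text \<open>l-graph on vertex set {0..<n}: a symmetric adjacency relation E with
  E i i meaning that vertex i carries a loop (at most one loop per vertex,
  no multiple edges are automatic for a relation). The degree of i is the number
  of neighbours j (including i itself if there is a loop), so a loop
  contributes exactly one.\<close>

definition lgraph :: "nat \<Rightarrow> (nat \<Rightarrow> nat \<Rightarrow> bool) \<Rightarrow> bool" where
  "lgraph n E \<longleftrightarrow> (\<forall>i j. E i j \<longrightarrow> i < n \<and> j < n) \<and> (\<forall>i j. E i j \<longrightarrow> E j i)"

definition ldeg :: "nat \<Rightarrow> (nat \<Rightarrow> nat \<Rightarrow> bool) \<Rightarrow> nat \<Rightarrow> nat" where
  "ldeg n E i = card {j. j < n \<and> E i j}"

definition loop_graphic :: "nat list \<Rightarrow> bool" where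
  "loop_graphic P \<longleftrightarrow>
     (\<exists>E. lgraph (length P) E \<and> (\<forall>i < length P. ldeg (length P) E i = P ! i))"

text \<open>Bipartite graph with stable sets V1 = {0..<m} (left) and V2 = {0..<k}
  (right), given by B i j meaning left vertex i is adjacent to right vertex j.\<close>

definition realizes :: "(nat \<Rightarrow> nat \<Rightarrow> bool) \<Rightarrow> nat list \<Rightarrow> nat list \<Rightarrow> bool" where
  "realizes B P Q \<longleftrightarrow>
     (\<forall>i j. B i j \<longrightarrow> i < length P \<and> j < length Q) \<and>
     (\<forall>i < length P. card {j. j < length Q \<and> B i j} = P ! i) \<and>
     (\<forall>j < length Q. card {i. i < length P \<and> B i j} = Q ! j)"

definition bigraphic :: "nat list \<Rightarrow> nat list \<Rightarrow> bool" where
  "bigraphic P Q \<longleftrightarrow> (\<exists>B. realizes B P Q)"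

definition mirror :: "nat \<Rightarrow> nat \<Rightarrow> (nat \<Rightarrow> nat \<Rightarrow> bool) \<Rightarrow> bool" where
  "mirror m k B \<longleftrightarrow> (\<exists>\<phi>. bij_betw \<phi> {0..<m} {0..<k} \<and>
      (\<forall>u < m. \<forall>v < m. B u (\<phi> v) \<longleftrightarrow> B v (\<phi> u)))"

definition mirror_bigraphic :: "nat list \<Rightarrow> bool" where
  "mirror_bigraphic P \<longleftrightarrow> bigraphic P P \<and>
     (\<exists>B. realizes B P P \<and> mirror (length P) (length P) B)"

end

theory Submission
  imports Defs
begin


definition sw :: "(nat \<Rightarrow> nat \<Rightarrow> bool) \<Rightarrow> nat \<Rightarrow> nat \<Rightarrow> nat \<Rightarrow> nat \<Rightarrow> nat \<Rightarrow> nat \<Rightarrow> bool" where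
  "sw B r1 r2 c1 c2 = (\<lambda>x y. if (x = r1 \<and> y = c1) \<or> (x = r2 \<and> y = c2) then False
      else if (x = r1 \<and> y = c2) \<or> (x = r2 \<and> y = c1) then True else B x y)"

lemma card_swap: "finite S \<Longrightarrow> a \<in> S \<Longrightarrow> b \<notin> S \<Longrightarrow> card (insert b (S - {a})) = card S"
  by (metis card.insert card_Diff1_less card_Diff_singleton finite_Diff Diff_iff Suc_pred' gr_implies_not0 not_gr_zero)

lemma sw_realizes:
  assumes R: "realizes B P P" and "r1 \<noteq> r2" "c1 \<noteq> c2" "B r1 c1" "B r2 c2" "\<not> B r1 c2" "\<not> B r2 c1"
  shows "realizes (sw B r1 r2 c1 c2) P P"
proof -
  let ?n = "length P"
  let ?B = "sw B r1 r2 c1 c2"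
  have bd: "\<And>i j. B i j \<Longrightarrow> i < ?n \<and> j < ?n" using R unfolding realizes_def by blast
  have r1: "r1 < ?n" "c1 < ?n" "r2 < ?n" "c2 < ?n" using bd assms by blast+
  have rows: "\<And>i. i < ?n \<Longrightarrow> card {j. j < ?n \<and> B i j} = P ! i"
   and cols: "\<And>j. j < ?n \<Longrightarrow> card {i. i < ?n \<and> B i j} = P ! j" using R unfolding realizes_def by blast+
  have A: "\<forall>i j. ?B i j \<longrightarrow> i < ?n \<and> j < ?n" using bd r1 unfolding sw_def by auto
  have B: "card {j. j < ?n \<and> ?B i j} = P ! i" if i: "i < ?n" for i
  proof -
    consider "i = r1" | "i = r2" | "i \<noteq> r1" "i \<noteq> r2" by blast
    then show ?thesis
    proof cases
      case 1
      have "{j. j < ?n \<and> ?B i j} = insert c2 ({j. j < ?n \<and> B i j} - {c1})"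
        using 1 assms r1 unfolding sw_def by auto
      then show ?thesis using card_swap[of "{j. j < ?n \<and> B i j}" c1 c2] rows[OF i] 1 assms r1 by auto
    next
      case 2
      have "{j. j < ?n \<and> ?B i j} = insert c1 ({j. j < ?n \<and> B i j} - {c2})"
        using 2 assms r1 unfolding sw_def by auto
      then show ?thesis using card_swap[of "{j. j < ?n \<and> B i j}" c2 c1] rows[OF i] 2 assms r1 by auto
    next
      case 3
      have "{j. j < ?n \<and> ?B i j} = {j. j < ?n \<and> B i j}" using 3 unfolding sw_def by auto
      then show ?thesis using rows[OF i] by simp
    qed
  qed
  have C: "card {i. i < ?n \<and> ?B i j} = P ! j" if j: "j < ?n" for j
  proof -
    consider "j = c1" | "j = c2" | "j \<noteq> c1" "j \<noteq> c2" by blast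
    then show ?thesis
    proof cases
      case 1
      have "{i. i < ?n \<and> ?B i j} = insert r2 ({i. i < ?n \<and> B i j} - {r1})"
        using 1 assms r1 unfolding sw_def by auto
      then show ?thesis using card_swap[of "{i. i < ?n \<and> B i j}" r1 r2] cols[OF j] 1 assms r1 by auto
    next
      case 2
      have "{i. i < ?n \<and> ?B i j} = insert r1 ({i. i < ?n \<and> B i j} - {r2})"
        using 2 assms r1 unfolding sw_def by auto
      then show ?thesis using card_swap[of "{i. i < ?n \<and> B i j}" r2 r1] cols[OF j] 2 assms r1 by auto
    next
      case 3
      have "{i. i < ?n \<and> ?B i j} = {i. i < ?n \<and> B i j}" using 3 unfolding sw_def by auto
      then show ?thesis using cols[OF j] by simp
    qed
  qed
  show ?thesis unfolding realizes_def using A B C by blast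
qed

definition asy :: "(nat \<Rightarrow> nat \<Rightarrow> bool) \<Rightarrow> nat \<Rightarrow> (nat \<times> nat) set" where
  "asy B n = {(x,y). x < n \<and> y < n \<and> B x y \<noteq> B y x}"

lemma finite_asy: "finite (asy B n)"
  by (rule finite_subset[of _ "{..<n} \<times> {..<n}"]) (auto simp: asy_def)

lemma card_dec:
  assumes "asy B' n - Y \<subseteq> asy B n - X" "X \<subseteq> asy B n" "card Y < card X" "finite Y"
  shows "card (asy B' n) < card (asy B n)"
proof -
  have "card (asy B' n) \<le> card ((asy B' n - Y) \<union> Y)" by (rule card_mono) (auto simp: finite_asy assms)
  also have "\<dots> \<le> card (asy B' n - Y) + card Y" by (rule card_Un_le)
  also have "\<dots> \<le> card (asy B n - X) + card Y" using card_mono[OF _ assms(1)] by (simp add: finite_asy)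
  also have "\<dots> = card (asy B n) - card X + card Y" using assms(2) by (simp add: card_Diff_subset finite_subset[OF assms(2) finite_asy])
  also have "\<dots> < card (asy B n)" using assms(3) card_mono[OF finite_asy assms(2)] by linarith
  finally show ?thesis .
qed



lemma bnd: "realizes B P P \<Longrightarrow> B i j \<Longrightarrow> i < length P \<and> j < length P"
  unfolding realizes_def by blast

lemma asy_sub:
  assumes "\<And>x y. (x,y) \<in> X \<Longrightarrow> B' x y = B' y x"
    and "\<And>x y. (x,y) \<notin> X \<union> Y \<Longrightarrow> x \<noteq> y \<Longrightarrow> B' x y = B x y"
    and "\<And>x y. (x,y) \<in> X \<union> Y \<Longrightarrow> (y,x) \<in> X \<union> Y"
  shows "asy B' n - Y \<subseteq> asy B n - X"
proof
  fix p assume p: "p \<in> asy B' n - Y"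
  obtain x y where xy: "p = (x,y)" by (cases p)
  have nX: "(x,y) \<notin> X" using p xy assms(1) unfolding asy_def by auto
  hence n1: "(x,y) \<notin> X \<union> Y" using p xy by auto
  hence n2: "(y,x) \<notin> X \<union> Y" using assms(3) by blast
  have ne: "x \<noteq> y" using p xy unfolding asy_def by auto
  show "p \<in> asy B n - X" using p xy nX assms(2)[OF n1 ne] assms(2)[OF n2 ne[symmetric]] unfolding asy_def by auto
qed

lemma tri_move:
  assumes R: "realizes B P P" and a: "B i j" "\<not> B j i" "B j k" "\<not> B k j" "B k i" "\<not> B i k"
  shows "\<exists>B'. realizes B' P P \<and> card (asy B' (length P)) < card (asy B (length P))"
proof -
  let ?n = "length P"
  have d: "i \<noteq> j" "j \<noteq> k" "i \<noteq> k" using a by auto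
  have lt: "i < ?n" "j < ?n" "k < ?n" using bnd[OF R] a by blast+
  let ?X = "{(i,j),(j,i),(j,k),(k,j),(k,i),(i,k)}"
  have X: "?X \<subseteq> asy B ?n" using a lt unfolding asy_def by auto
  have cX: "card ?X = 6" using d by auto
  show ?thesis
  proof (cases "B j j")
    case False
    let ?B = "sw B i j j k"
    have "realizes ?B P P" by (rule sw_realizes[OF R]) (use d a False in auto)
    moreover have "asy ?B ?n - {} \<subseteq> asy B ?n - ?X" by (rule asy_sub) (use d a False in \<open>auto simp: sw_def\<close>)
    ultimately show ?thesis using card_dec[of ?B ?n "{}" B ?X] X cX by auto
  next
    case True
    let ?B = "sw B j k j i"
    have "realizes ?B P P" by (rule sw_realizes[OF R]) (use d a True in auto)
    moreover have "asy ?B ?n - {} \<subseteq> asy B ?n - ?X" by (rule asy_sub) (use d a True in \<open>auto simp: sw_def\<close>)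
    ultimately show ?thesis using card_dec[of ?B ?n "{}" B ?X] X cX by auto
  qed
qed

lemma path_move:
  assumes R: "realizes B P P" and a: "B a b" "\<not> B b a" "B b c" "\<not> B c b" "B c d" "\<not> B d c"
    and na: "\<not> (B a d \<and> \<not> B d a)" and d: "a \<noteq> b" "a \<noteq> c" "a \<noteq> d" "b \<noteq> c" "b \<noteq> d" "c \<noteq> d"
  shows "\<exists>B'. realizes B' P P \<and> card (asy B' (length P)) < card (asy B (length P))"
proof -
  let ?n = "length P"
  have lt: "a < ?n" "b < ?n" "c < ?n" "d < ?n" using bnd[OF R] a by blast+
  let ?X = "{(a,b),(b,a),(b,c),(c,b),(c,d),(d,c)}"
  let ?Y = "{(a,d),(d,a)}"
  have X: "?X \<subseteq> asy B ?n" using a lt unfolding asy_def by auto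
  have cX: "card ?X = 6" using d by auto
  have cY: "card ?Y \<le> 2" by (simp add: card_insert_le_m1)
  show ?thesis
  proof (cases "B d a")
    case True
    let ?B = "sw B b d c a"
    have "realizes ?B P P" by (rule sw_realizes[OF R]) (use d a True in auto)
    moreover have "asy ?B ?n - ?Y \<subseteq> asy B ?n - ?X" by (rule asy_sub) (use d a True in \<open>auto simp: sw_def\<close>)
    ultimately show ?thesis using card_dec[of ?B ?n ?Y B ?X] X cX cY by auto
  next
    case False
    then have "\<not> B a d" using na by blast
    let ?B = "sw B a c b d"
    have "realizes ?B P P" by (rule sw_realizes[OF R]) (use d a False \<open>\<not> B a d\<close> in auto)
    moreover have "asy ?B ?n - ?Y \<subseteq> asy B ?n - ?X" by (rule asy_sub) (use d a False \<open>\<not> B a d\<close> in \<open>auto simp: sw_def\<close>)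
    ultimately show ?thesis using card_dec[of ?B ?n ?Y B ?X] X cX cY by auto
  qed
qed



lemma step:
  assumes R: "realizes B P P" and ne: "asy B (length P) \<noteq> {}"
  shows "\<exists>B'. realizes B' P P \<and> card (asy B' (length P)) < card (asy B (length P))"
proof (rule ccontr)
  assume H: "\<not> ?thesis"
  let ?n = "length P"
  define arc where "arc x y = (B x y \<and> \<not> B y x)" for x y
  have T: False if "arc i j" "arc j k" "arc k i" for i j k
  proof -
    have "B i j" "\<not> B j i" "B j k" "\<not> B k j" "B k i" "\<not> B i k" using that unfolding arc_def by auto
    from tri_move[OF R this] H show False by blast
  qed
  have irr: "\<not> arc x x" for x unfolding arc_def by blast
  have ant: "arc x y \<Longrightarrow> \<not> arc y x" for x y unfolding arc_def by blast
  have Q: "arc a d" if ab: "arc a b" and bc: "arc b c" and cd: "arc c d" for a b c d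
  proof (rule ccontr)
    assume nad: "\<not> arc a d"
    have "a \<noteq> b" "b \<noteq> c" "c \<noteq> d" using ab bc cd irr by blast+
    moreover have "a \<noteq> c" "b \<noteq> d" using ab bc cd ant by blast+
    moreover have "a \<noteq> d" using T ab bc cd by blast
    moreover have "B a b" "\<not> B b a" "B b c" "\<not> B c b" "B c d" "\<not> B d c" "\<not> (B a d \<and> \<not> B d a)"
      using ab bc cd nad unfolding arc_def by auto
    ultimately show False using path_move[OF R] H by blast
  qed
  have Bal: "\<exists>w. arc v w" if uv: "arc u v" for u v
  proof (rule ccontr)
    assume nw: "\<not> (\<exists>w. arc v w)"
    have v: "v < ?n" and u: "u < ?n" using uv bnd[OF R] unfolding arc_def by blast+
    have c1: "card {j. j < ?n \<and> B v j} = P ! v" and c2: "card {i. i < ?n \<and> B i v} = P ! v"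
      using R v unfolding realizes_def by blast+
    have sub: "{j. j < ?n \<and> B v j} \<subseteq> {i. i < ?n \<and> B i v}" using nw unfolding arc_def by blast
    have u1: "u \<in> {i. i < ?n \<and> B i v}" using uv u unfolding arc_def by simp
    have u2: "u \<notin> {j. j < ?n \<and> B v j}" using uv unfolding arc_def by simp
    have ps: "{j. j < ?n \<and> B v j} \<subset> {i. i < ?n \<and> B i v}" using sub u1 u2 by blast
    have fin: "finite {i. i < ?n \<and> B i v}" by simp
    have "card {j. j < ?n \<and> B v j} < card {i. i < ?n \<and> B i v}" by (rule psubset_card_mono[OF fin ps])
    then show False using c1 c2 by simp
  qed
  obtain i j where ij: "arc i j"
  proof -
    obtain x y where "(x,y) \<in> asy B ?n" using ne by auto
    then have "B x y \<noteq> B y x" unfolding asy_def by auto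
    then show ?thesis using that unfolding arc_def by blast
  qed
  define f where "f v = (SOME w. arc v w)" for v
  define s where "s m = (f ^^ m) j" for m
  have sS: "s (Suc m) = f (s m)" for m unfolding s_def by simp
  have S: "arc (s m) (s (Suc m))" for m
  proof (induction m)
    case 0
    have "\<exists>w. arc j w" using Bal[OF ij] .
    then have "arc j (SOME w. arc j w)" by (rule someI_ex)
    then show ?case by (simp add: s_def f_def)
  next
    case (Suc m)
    have "\<exists>w. arc (s (Suc m)) w" using Bal[OF Suc] .
    then have "arc (s (Suc m)) (SOME w. arc (s (Suc m)) w)" by (rule someI_ex)
    then show ?case by (simp only: sS[of "Suc m"] f_def)
  qed
  have odd: "arc (s t) (s (t + 2*m + 1))" for t m
  proof (induction m arbitrary: t)
    case 0 then show ?case using S by simp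
  next
    case (Suc m)
    have "arc (s (t+2)) (s (t + 2 + 2*m + 1))" by (rule Suc)
    then have "arc (s (Suc (Suc t))) (s (t + 2 * Suc m + 1))" by (simp add: algebra_simps)
    then show ?case using Q[OF S[of t] S[of "Suc t"]] by simp
  qed
  have lt: "s m < ?n" for m using S[of m] bnd[OF R] unfolding arc_def by blast
  have "\<not> inj_on s {0..?n}"
  proof
    assume inj: "inj_on s {0..?n}"
    have "s ` {0..?n} \<subseteq> {0..<?n}" using lt by auto
    then have "card (s ` {0..?n}) \<le> ?n" using card_mono[of "{0..<?n}"] by fastforce
    then show False using card_image[OF inj] by simp
  qed
  then obtain x y where xy: "x \<noteq> y" "s x = s y" unfolding inj_on_def by blast
  obtain p q where pq: "p < q" "s p = s q"
  proof (cases "x < y")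
    case True then show ?thesis using that xy by blast
  next
    case False then have "y < x" using xy by simp
    then show ?thesis using that xy by simp
  qed
  have shift: "s (p + t) = s (q + t)" for t
    by (induction t) (use pq in \<open>simp_all add: sS\<close>)
  show False
  proof (cases "odd (q - p)")
    case True
    then have "\<exists>m. q - p = 2*m + 1" by presburger
    then obtain m where m: "q - p = 2*m + 1" by blast
    then have "q = p + 2*m + 1" using pq by simp
    then have "arc (s p) (s q)" using odd[of p m] by simp
    then show False using pq irr by simp
  next
    case False
    have "\<exists>m. q - p = 2*m + 2" using False pq by presburger
    then obtain m where m: "q - p = 2*m + 2" by blast
    then have "q = (p + 1) + 2*m + 1" using pq by simp
    then have "arc (s (p+1)) (s q)" using odd[of "p+1" m] by simp
    then have "arc (s (p+1)) (s p)" using pq by simp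
    then show False using S[of p] ant by simp
  qed
qed

lemma sym_exists:
  assumes "bigraphic P P"
  shows "\<exists>B. realizes B P P \<and> (\<forall>x y. B x y = B y x)"
proof -
  let ?n = "length P"
  have main: "\<And>B. realizes B P P \<Longrightarrow> card (asy B ?n) = k \<Longrightarrow> \<exists>B'. realizes B' P P \<and> asy B' ?n = {}" for k
  proof (induction k rule: less_induct)
    case (less k)
    show ?case
    proof (cases "asy B ?n = {}")
      case True then show ?thesis using less by blast
    next
      case False
      then obtain B' where "realizes B' P P" "card (asy B' ?n) < card (asy B ?n)"
        using step[OF less(2)] by blast
      then show ?thesis using less by blast
    qed
  qed
  obtain B where "realizes B P P" using assms unfolding bigraphic_def by blast
  then obtain B' where R: "realizes B' P P" and E: "asy B' ?n = {}" using main by blast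
  have "B' x y = B' y x" for x y
  proof (cases "x < ?n \<and> y < ?n")
    case True then show ?thesis using E unfolding asy_def by auto
  next
    case False then show ?thesis using bnd[OF R] by blast
  qed
  then show ?thesis using R by blast
qed


theorem theorem3:
  fixes P :: "nat list"
  shows "(loop_graphic P \<longleftrightarrow> bigraphic P P) \<and> (bigraphic P P \<longleftrightarrow> mirror_bigraphic P)"
proof -
  let ?n = "length P"
  have L2B: "bigraphic P P" if lg: "loop_graphic P"
  proof -
    obtain E where E: "lgraph ?n E" "\<forall>i < ?n. ldeg ?n E i = P ! i" using lg unfolding loop_graphic_def by blast
    have sy: "E x y = E y x" for x y using E(1) unfolding lgraph_def by blast
    have "realizes E P P" unfolding realizes_def
    proof (intro conjI)
      show "\<forall>i j. E i j \<longrightarrow> i < ?n \<and> j < ?n" using E(1) unfolding lgraph_def by blast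
      show "\<forall>i < ?n. card {j. j < ?n \<and> E i j} = P ! i" using E(2) unfolding ldeg_def by simp
      show "\<forall>j < ?n. card {i. i < ?n \<and> E i j} = P ! j" using E(2) sy unfolding ldeg_def by simp
    qed
    then show ?thesis unfolding bigraphic_def by blast
  qed
  have B2L: "loop_graphic P" and B2M: "mirror_bigraphic P" if bg: "bigraphic P P"
  proof -
    obtain B where R: "realizes B P P" and sy: "\<forall>x y. B x y = B y x" using sym_exists[OF bg] by blast
    have "lgraph ?n B" unfolding lgraph_def using bnd[OF R] sy by blast
    moreover have "\<forall>i < ?n. ldeg ?n B i = P ! i" using R unfolding realizes_def ldeg_def by blast
    ultimately show "loop_graphic P" unfolding loop_graphic_def by blast
    have "mirror ?n ?n B" unfolding mirror_def
      by (rule exI[of _ id]) (use sy in simp)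
    then show "mirror_bigraphic P" unfolding mirror_bigraphic_def using bg R by blast
  qed
  have M2B: "bigraphic P P" if "mirror_bigraphic P" using that unfolding mirror_bigraphic_def by blast
  show ?thesis using L2B B2L B2M M2B by blast
qed

end
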